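(* Let $x_L<x_R$, $\Delta x=x_R-x_L$, and let $\sigma_L,\sigma_R:[0,\infty)\to[0,\infty)$ be piecewise linear continuous functions. Define for $x\in[x_L,x_R]$, $y\ge0$, $$\sigma(x,y)=\frac{\sigma_R(y)(x-x_L)+\sigma_L(y)(x_R-x)}{\Delta x},\qquad B(x)=B_L+(B_R-B_L)\frac{x-x_L}{\Delta x},$$ with $B_L,B_R\in\mathbb R$. Let $W\in\mathbb R$ be a constant water-surface elevation and $h(x)=\max(W-B(x),0)$. Set $$A(x)=\int_0^{h(x)}\sigma(x,y)\,dy,\quad I_1(x)=\int_0^{h(x)}(h(x)-y)\sigma(x,y)\,dy,\quad I_2(x)=\int_0^{h(x)}(h(x)-y)\,\partial_x\sigma(x,y)\,dy.$$ Then $$I_1(x_R)-I_1(x_L)-\int_{x_L}^{x_R}I_2(x)\,dx+\int_{x_L}^{x_R}A(x)\,B'(x)\,dx=0.$$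
   Context: $I_1$ is the hydrostatic pressure force and $I_2$ the wall pressure force of a channel with cross-section width $\sigma(x,y)$ at longitudinal position $x$ and height $y$ above the bed $B(x)$; the cross-section is linearly interpolated in $x$ between two given piecewise-linear cross-sections at the cell ends. *)

theory Defs
  imports "HOL-Analysis.Analysis"
begin

definition piecewise_linear_nonneg_half :: "(real \<Rightarrow> real) \<Rightarrow> bool" where
  "piecewise_linear_nonneg_half f \<longleftrightarrow>
     (\<exists>(t :: nat \<Rightarrow> real) (n :: nat).
        t 0 = 0 \<and> (\<forall>i<n. t i < t (Suc i)) \<and>
        (\<forall>i<n. \<exists>a b. \<forall>y\<in>{t i..t (Suc i)}. f y = a * y + b) \<and>
        (\<exists>a b. \<forall>y\<in>{t n..}. f y = a * y + b))"

end

theory Submission imports Defs begin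

lemma Qderiv:
  fixes s :: "real \<Rightarrow> real"
  assumes "continuous_on {0..} s" "t > 0"
  shows "((\<lambda>u. integral {0..u} s) has_real_derivative s t) (at t)"
proof -
  have c: "continuous_on {0..t+1} s" using assms(1) by (rule continuous_on_subset) auto
  have "((\<lambda>u. integral {0..u} s) has_vector_derivative s t) (at t within {0..t+1})"
    using integral_has_vector_derivative[OF c, of t] assms by auto
  moreover have "at t within {0..t+1} = at t" using assms by (intro at_within_Icc_at) auto
  ultimately show ?thesis by (simp add: has_real_derivative_iff_has_vector_derivative)
qed

lemma Pderiv:
  fixes s :: "real \<Rightarrow> real"
  assumes "continuous_on {0..} s" "t > 0"
  shows "((\<lambda>u. u * integral {0..u} s - integral {0..u} (\<lambda>y. y * s y)) has_real_derivative integral {0..t} s) (at t)"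
proof -
  have c2: "continuous_on {0..} (\<lambda>y. y * s y)" using assms(1) by (intro continuous_intros) auto
  have "((\<lambda>u. u * integral {0..u} s - integral {0..u} (\<lambda>y. y * s y)) has_real_derivative
     (t * s t + 1 * integral {0..t} s) - t * s t) (at t)"
    by (intro DERIV_diff DERIV_mult' DERIV_ident Qderiv[OF assms] Qderiv[OF c2 assms(2), simplified])
  then show ?thesis by simp
qed

lemma Pcont:
  fixes s :: "real \<Rightarrow> real"
  assumes "continuous_on {0..} s"
  shows "continuous_on {0..M} (\<lambda>u. u * integral {0..u} s - integral {0..u} (\<lambda>y. y * s y))"
    "continuous_on {0..M} (\<lambda>u. integral {0..u} s)"
proof -
  have c: "continuous_on {0..M} s" using assms(1) by (rule continuous_on_subset) auto
  have c2: "continuous_on {0..M} (\<lambda>y. y * s y)" using c by (intro continuous_intros) auto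
  have a: "continuous_on {0..M} (\<lambda>u. integral {0..u} s)"
    by (rule indefinite_integral_continuous_1) (rule integrable_continuous_real[OF c])
  have b: "continuous_on {0..M} (\<lambda>u. integral {0..u} (\<lambda>y. y * s y))"
    by (rule indefinite_integral_continuous_1) (rule integrable_continuous_real[OF c2])
  show "continuous_on {0..M} (\<lambda>u. u * integral {0..u} s - integral {0..u} (\<lambda>y. y * s y))"
    using a b by (intro continuous_intros)
  show "continuous_on {0..M} (\<lambda>u. integral {0..u} s)" by (rule a)
qed

lemma lin4:
  fixes f1 f2 f3 f4 :: "real \<Rightarrow> real"
  assumes "f1 integrable_on S" "f2 integrable_on S" "f3 integrable_on S" "f4 integrable_on S"
  shows "integral S (\<lambda>y. a1*f1 y + a2*f2 y + a3*f3 y + a4*f4 y) =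
    a1*integral S f1 + a2*integral S f2 + a3*integral S f3 + a4*integral S f4"
proof -
  have "((\<lambda>y. a1*f1 y + a2*f2 y + a3*f3 y + a4*f4 y) has_integral
    (a1*integral S f1 + a2*integral S f2 + a3*integral S f3 + a4*integral S f4)) S"
    using assms by (intro has_integral_add has_integral_mult_right integrable_integral)
  then show ?thesis by (rule integral_unique)
qed

lemma comp_h:
  fixes P Q :: "real \<Rightarrow> real" and c BL W xL x :: real
  assumes dP: "\<And>t. t>0 \<Longrightarrow> (P has_real_derivative Q t) (at t)"
  and nx: "c \<noteq> 0 \<Longrightarrow> x \<noteq> xL + (W-BL)/c"
  shows "((\<lambda>z. P (max (W - (BL + c*(z-xL))) 0)) has_real_derivative
     Q (max (W - (BL + c*(x-xL))) 0) * (if W - (BL + c*(x-xL)) > 0 then -c else 0)) (at x)"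
proof -
  consider "W - (BL + c*(x-xL)) > 0" | "W - (BL + c*(x-xL)) < 0" | "W - (BL + c*(x-xL)) = 0" by linarith
  then show ?thesis
  proof cases
    case 1
    let ?U = "{z. BL + c*(z-xL) < W}"
    have o: "open ?U" by (intro open_Collect_less continuous_intros)
    have "((\<lambda>z. P (W - (BL + c*(z-xL)))) has_real_derivative Q (W - (BL + c*(x-xL))) * (0 - (0 + c*(1-0)))) (at x)"
      by (intro DERIV_chain2[of P _ "\<lambda>z. W - (BL + c*(z-xL))" x, OF dP[OF 1]] DERIV_diff DERIV_add DERIV_const DERIV_cmult DERIV_ident)
    then have "((\<lambda>z. P (W - (BL + c*(z-xL)))) has_real_derivative Q (max (W - (BL + c*(x-xL))) 0) * (if W - (BL + c*(x-xL)) > 0 then -c else 0)) (at x)"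
      using 1 by simp
    then show ?thesis
      by (rule has_field_derivative_transform_within_open[OF _ o]) (use 1 in auto)
  next
    case 2
    let ?U = "{z. W < BL + c*(z-xL)}"
    have o: "open ?U" by (intro open_Collect_less continuous_intros)
    have "((\<lambda>z. P 0) has_real_derivative Q (max (W - (BL + c*(x-xL))) 0) * (if W - (BL + c*(x-xL)) > 0 then -c else 0)) (at x)"
      using 2 by (simp add: DERIV_const)
    then show ?thesis
      by (rule has_field_derivative_transform_within_open[OF _ o]) (use 2 in auto)
  next
    case 3
    have "c = 0"
    proof (rule ccontr)
      assume "c \<noteq> 0"
      with 3 have "x = xL + (W-BL)/c" by (simp add: field_simps)
      with nx \<open>c \<noteq> 0\<close> show False by blast
    qed
    with 3 show ?thesis by (simp add: DERIV_const)
  qed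
qed

lemma deriv_lin:
  fixes a b D xL xR x :: real
  shows "deriv (\<lambda>s. (a * (s - xL) + b * (xR - s)) / D) x = (a - b) / D"
proof (rule DERIV_imp_deriv)
  have "((\<lambda>s. (a * (s - xL) + b * (xR - s)) / D) has_real_derivative (a * (1 - 0) + b * (0 - 1)) / D) (at x)"
    by (intro DERIV_cdivide DERIV_add DERIV_cmult DERIV_diff DERIV_ident DERIV_const)
  then show "((\<lambda>s. (a * (s - xL) + b * (xR - s)) / D) has_real_derivative (a - b) / D) (at x)"
    by simp
qed

theorem mainTheorem2:
  fixes xL xR BL BR W :: real
    and sigmaL sigmaR :: "real \<Rightarrow> real"
    and sigma :: "real \<Rightarrow> real \<Rightarrow> real"
    and B h A I1 I2 :: "real \<Rightarrow> real"
  assumes "xL < xR"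
    and "piecewise_linear_nonneg_half sigmaL" "continuous_on {0..} sigmaL"
    and "\<forall>y\<ge>0. sigmaL y \<ge> 0"
    and "piecewise_linear_nonneg_half sigmaR" "continuous_on {0..} sigmaR"
    and "\<forall>y\<ge>0. sigmaR y \<ge> 0"
    and "sigma = (\<lambda>x y. (sigmaR y * (x - xL) + sigmaL y * (xR - x)) / (xR - xL))"
    and "B = (\<lambda>x. BL + (BR - BL) * (x - xL) / (xR - xL))"
    and "h = (\<lambda>x. max (W - B x) 0)"
    and "A = (\<lambda>x. integral {0..h x} (\<lambda>y. sigma x y))"
    and "I1 = (\<lambda>x. integral {0..h x} (\<lambda>y. (h x - y) * sigma x y))"
    and "I2 = (\<lambda>x. integral {0..h x} (\<lambda>y. (h x - y) * deriv (\<lambda>s. sigma s y) x))"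
  shows "I1 xR - I1 xL - integral {xL..xR} I2 + integral {xL..xR} (\<lambda>x. A x * deriv B x) = 0"
proof -
  note A = assms
  define D where "D = xR - xL"
  have D0: "D > 0" "D \<noteq> 0" "xR - xL \<noteq> 0" using A(1) by (auto simp: D_def)
  have sig: "sigma = (\<lambda>x y. (sigmaR y * (x - xL) + sigmaL y * (xR - x)) / D)"
    using A(8) by (simp add: D_def)
  define c where "c = (BR - BL) / D"
  define QL where "QL = (\<lambda>u. integral {0..u} sigmaL)"
  define QR where "QR = (\<lambda>u. integral {0..u} sigmaR)"
  define RL where "RL = (\<lambda>u. integral {0..u} (\<lambda>y. y * sigmaL y))"
  define RR where "RR = (\<lambda>u. integral {0..u} (\<lambda>y. y * sigmaR y))"
  define PL where "PL = (\<lambda>u. u * integral {0..u} sigmaL - integral {0..u} (\<lambda>y. y * sigmaL y))"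
  define PR where "PR = (\<lambda>u. u * integral {0..u} sigmaR - integral {0..u} (\<lambda>y. y * sigmaR y))"
  have hc: "h = (\<lambda>z. max (W - (BL + c*(z-xL))) 0)"
    using A(9,10) by (auto simp: c_def D_def)
  have h0: "h x \<ge> 0" for x by (simp add: hc)
  have intg: "f integrable_on {0..u}" if "continuous_on {0..} f" for f :: "real \<Rightarrow> real" and u :: real
    by (rule integrable_continuous_real, rule continuous_on_subset[OF that]) auto
  have cyL: "continuous_on {0..} (\<lambda>y. y * sigmaL y)" using A(3) by (intro continuous_intros) auto
  have cyR: "continuous_on {0..} (\<lambda>y. y * sigmaR y)" using A(6) by (intro continuous_intros) auto
  note ints = intg[OF A(3)] intg[OF A(6)] intg[OF cyL] intg[OF cyR]
  have eA: "A x = ((x-xL)*QR(h x) + (xR-x)*QL(h x))/D" for x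
  proof -
    have "A x = integral {0..h x} (\<lambda>y. ((x-xL)/D)* sigmaR y + 0*(y* sigmaR y) + ((xR-x)/D)* sigmaL y + 0*(y* sigmaL y))"
      using A(11) D0 by (simp add: sig add_divide_distrib mult.commute)
    also have "\<dots> = ((x-xL)/D)*QR(h x) + 0 + ((xR-x)/D)*QL(h x) + 0"
      by (subst lin4) (use ints in \<open>auto simp: QR_def QL_def\<close>)
    finally show ?thesis by (simp add: add_divide_distrib)
  qed
  have eI1: "I1 x = ((x-xL)*PR(h x) + (xR-x)*PL(h x))/D" for x
  proof -
    have "I1 x = integral {0..h x} (\<lambda>y. (h x*(x-xL)/D)* sigmaR y + (-(x-xL)/D)*(y* sigmaR y) + (h x*(xR-x)/D)* sigmaL y + (-(xR-x)/D)*(y* sigmaL y))"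
      unfolding A(12) sig using D0 by (intro arg_cong[where f="integral _"] ext) (simp add: field_simps)
    also have "\<dots> = (h x*(x-xL)/D)*QR(h x) + (-(x-xL)/D)*RR(h x) + (h x*(xR-x)/D)*QL(h x) + (-(xR-x)/D)*RL(h x)"
      by (subst lin4) (use ints in \<open>auto simp: QR_def QL_def RR_def RL_def\<close>)
    also have "\<dots> = ((x-xL)*PR(h x) + (xR-x)*PL(h x))/D"
      using D0 by (simp add: PR_def PL_def QR_def QL_def RR_def RL_def field_simps)
    finally show ?thesis .
  qed
  have eI2: "I2 x = (PR(h x) - PL(h x))/D" for x
  proof -
    have dd: "deriv (\<lambda>s. sigma s y) x = (sigmaR y - sigmaL y) / D" for y
      unfolding sig by (rule deriv_lin)
    have "I2 x = integral {0..h x} (\<lambda>y. (h x/D)* sigmaR y + (-1/D)*(y* sigmaR y) + (-h x/D)* sigmaL y + (1/D)*(y* sigmaL y))"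
      unfolding A(13) dd using D0 by (intro arg_cong[where f="integral _"] ext) (simp add: field_simps)
    also have "\<dots> = (h x/D)*QR(h x) + (-1/D)*RR(h x) + (-h x/D)*QL(h x) + (1/D)*RL(h x)"
      by (subst lin4) (use ints in \<open>auto simp: QR_def QL_def RR_def RL_def\<close>)
    also have "\<dots> = (PR(h x) - PL(h x))/D"
      using D0 by (simp add: PR_def PL_def QR_def QL_def RR_def RL_def field_simps)
    finally show ?thesis .
  qed
  have eB: "deriv B x = c" for x
  proof -
    have "B = (\<lambda>s. ((BR - BL + BL) * (s - xL) + BL * (xR - s)) / D)"
      using A(9) D0 by (auto simp: D_def field_simps)
    then show ?thesis by (simp add: deriv_lin c_def)
  qed
  define S where "S = (if c = 0 then {} else {xL + (W-BL)/c})"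
  define hd where "hd = (\<lambda>x. if W - (BL + c*(x-xL)) > 0 then -c else 0)"
  have dPR: "((\<lambda>z. PR (h z)) has_real_derivative QR (h x) * hd x) (at x)" if "x \<notin> S" for x
    unfolding hc hd_def using that
    by (intro comp_h) (auto simp: S_def PR_def QR_def intro: Pderiv[OF A(6)] split: if_splits)
  have dPL: "((\<lambda>z. PL (h z)) has_real_derivative QL (h x) * hd x) (at x)" if "x \<notin> S" for x
    unfolding hc hd_def using that
    by (intro comp_h) (auto simp: S_def PL_def QL_def intro: Pderiv[OF A(3)] split: if_splits)
  define G where "G = (\<lambda>z. ((z-xL)*PR(h z) + (xR-z)*PL(h z))/D)"
  have dG: "(G has_vector_derivative (I2 x - A x * deriv B x)) (at x)" if "x \<notin> S" for x
  proof -
    have "(G has_real_derivative ((x-xL) * (QR (h x) * hd x) + (1-0)*PR(h x) + ((xR-x)*(QL (h x) * hd x) + (0-1)*PL(h x)))/D) (at x)"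
      unfolding G_def by (intro DERIV_cdivide DERIV_add DERIV_mult' DERIV_diff DERIV_ident DERIV_const dPR dPL that)
    moreover have "((x-xL) * (QR (h x) * hd x) + (1-0)*PR(h x) + ((xR-x)*(QL (h x) * hd x) + (0-1)*PL(h x)))/D
       = I2 x - A x * deriv B x"
    proof (cases "W - (BL + c*(x-xL)) > 0")
      case True
      then show ?thesis unfolding eI2 eA eB hd_def using D0 by (simp add: field_simps)
    next
      case False
      then have "h x = 0" by (simp add: hc)
      then show ?thesis unfolding eI2 eA eB hd_def using D0 by (simp add: QR_def QL_def field_simps)
    qed
    ultimately show ?thesis by (simp add: has_real_derivative_iff_has_vector_derivative[symmetric])
  qed
  define M where "M = \<bar>W\<bar> + \<bar>BL\<bar> + \<bar>BR - BL\<bar>"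
  have hM: "h ` {xL..xR} \<subseteq> {0..M}"
  proof
    fix y assume "y \<in> h ` {xL..xR}"
    then obtain z where z: "z \<in> {xL..xR}" "y = h z" by auto
    have t0: "0 \<le> (z-xL)/D" "(z-xL)/D \<le> 1" using z D0 by (auto simp: D_def field_simps)
    have "c*(z-xL) = (BR-BL)*((z-xL)/D)" by (simp add: c_def)
    then have "\<bar>c*(z-xL)\<bar> = \<bar>BR-BL\<bar>*((z-xL)/D)" by (simp only: abs_mult abs_of_nonneg[OF t0(1)])
    also have "\<dots> \<le> \<bar>BR-BL\<bar>" using t0 mult_left_le[OF t0(2) abs_ge_zero[of "BR-BL"]] by simp
    finally have "\<bar>c*(z-xL)\<bar> \<le> \<bar>BR-BL\<bar>" .
    then show "y \<in> {0..M}" using z by (auto simp: hc M_def)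
  qed
  have hcont: "continuous_on {xL..xR} h" unfolding hc by (intro continuous_intros)
  have cPR: "continuous_on {xL..xR} (\<lambda>z. PR (h z))"
    by (rule continuous_on_compose2[OF _ hcont hM]) (unfold PR_def, rule Pcont(1)[OF A(6)])
  have cPL: "continuous_on {xL..xR} (\<lambda>z. PL (h z))"
    by (rule continuous_on_compose2[OF _ hcont hM]) (unfold PL_def, rule Pcont(1)[OF A(3)])
  have cQR: "continuous_on {xL..xR} (\<lambda>z. QR (h z))"
    by (rule continuous_on_compose2[OF _ hcont hM]) (unfold QR_def, rule Pcont(2)[OF A(6)])
  have cQL: "continuous_on {xL..xR} (\<lambda>z. QL (h z))"
    by (rule continuous_on_compose2[OF _ hcont hM]) (unfold QL_def, rule Pcont(2)[OF A(3)])
  have cG: "continuous_on {xL..xR} G" unfolding G_def using cPR cPL D0 by (intro continuous_intros) auto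
  have fin: "finite S" by (simp add: S_def)
  have FT: "((\<lambda>x. I2 x - A x * deriv B x) has_integral (G xR - G xL)) {xL..xR}"
    by (rule fundamental_theorem_of_calculus_strong[OF fin]) (use A(1) dG cG in auto)
  have iI2: "I2 integrable_on {xL..xR}"
  proof -
    have "continuous_on {xL..xR} I2" unfolding eI2[abs_def] using cPR cPL D0 by (intro continuous_intros) auto
    then show ?thesis by (rule integrable_continuous_real)
  qed
  have iAB: "(\<lambda>x. A x * deriv B x) integrable_on {xL..xR}"
  proof -
    have "continuous_on {xL..xR} (\<lambda>x. A x * deriv B x)" unfolding eA eB using cQR cQL D0 by (intro continuous_intros) auto
    then show ?thesis by (rule integrable_continuous_real)
  qed
  have "integral {xL..xR} I2 - integral {xL..xR} (\<lambda>x. A x * deriv B x) = G xR - G xL"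
    using integral_unique[OF FT] integral_diff[OF iI2 iAB] by simp
  moreover have "G xR = I1 xR" "G xL = I1 xL" by (simp_all add: G_def eI1)
  ultimately show ?thesis by simp
qed

end
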